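(* Let $C$ be a nonzero linear code of length $n$ over $R$ with component codes $C_1,\dots,C_8$. Then $C$ is an MDS code over $R$ if and only if each $C_i$ ($1\le i\le 8$) is an MDS code over $\mathbb{Z}_4$ and all the $C_i$ have the same parameters (same cardinality and same minimum Hamming distance).
   Context: $R=\mathbb{Z}_4[u,v,w]/\langle u^2-u,v^2-v,w^2-w\rangle$, with idempotents $\eta_1=(1-u)(1-v)(1-w)$, $\eta_2=u(1-v)(1-w)$, $\eta_3=(1-u)v(1-w)$, $\eta_4=(1-u)(1-v)w$, $\eta_5=uv(1-w)$, $\eta_6=u(1-v)w$, $\eta_7=(1-u)vw$, $\eta_8=uvw$; every $\mathbf{x}\in R^n$ is uniquely $\sum_{i=1}^8\mathbf{x}_i\eta_i$ with $\mathbf{x}_i\in\mathbb{Z}_4^n$. A linear code over $R$ is an $R$-submodule of $R^n$; its component codes are $C_i=\{\mathbf{x}_i:\ \mathbf{x}\in C\}\subseteq\mathbb{Z}_4^n$. $d_H$ denotes minimum Hamming distance. A code $D$ of length $n$ over a finite ring $S$ is MDS if $d_H(D)=n-\log_{|S|}|D|+1$; here $|R|=4^8$. *)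

theory Defs
  imports Complex_Main "HOL-Library.Numeral_Type"
begin

text \<open>The ring R = Z4[u,v,w]/(u^2-u, v^2-v, w^2-w) is represented by the coefficient
  functions of multilinear polynomials: an element is a map from exponent
  triples (a,b,c) in {0,1}^3 (encoded as booleans) to Z4, standing for
  the sum of coeff(a,b,c) u^a v^b w^c.  Because u^2 = u etc., monomials multiply
  by componentwise disjunction of the exponent triples.\<close>

type_synonym Z4 = "4"
type_synonym mono = "bool \<times> bool \<times> bool"
type_synonym R = "mono \<Rightarrow> Z4"

definition mono_mult :: "mono \<Rightarrow> mono \<Rightarrow> mono" where
  "mono_mult m1 m2 = (case m1 of (a,b,c) \<Rightarrow> case m2 of (a',b',c') \<Rightarrow> (a \<or> a', b \<or> b', c \<or> c'))"

definition rzero :: R where "rzero = (\<lambda>m. 0)"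
definition radd :: "R \<Rightarrow> R \<Rightarrow> R" where "radd f g = (\<lambda>m. f m + g m)"
definition rsub :: "R \<Rightarrow> R \<Rightarrow> R" where "rsub f g = (\<lambda>m. f m - g m)"
definition rmul :: "R \<Rightarrow> R \<Rightarrow> R" where
  "rmul f g = (\<lambda>m. \<Sum>p\<in>{p. mono_mult (fst p) (snd p) = m}. f (fst p) * g (snd p))"
definition rconst :: "Z4 \<Rightarrow> R" where
  "rconst c = (\<lambda>m. if m = (False, False, False) then c else 0)"
definition rone :: R where "rone = rconst 1"
definition ru :: R where "ru = (\<lambda>m. if m = (True, False, False) then 1 else 0)"
definition rv :: R where "rv = (\<lambda>m. if m = (False, True, False) then 1 else 0)"
definition rw :: R where "rw = (\<lambda>m. if m = (False, False, True) then 1 else 0)"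

definition eta :: "nat \<Rightarrow> R" where
  "eta i = (if i = 1 then rmul (rmul (rsub rone ru) (rsub rone rv)) (rsub rone rw)
       else if i = 2 then rmul (rmul ru (rsub rone rv)) (rsub rone rw)
       else if i = 3 then rmul (rmul (rsub rone ru) rv) (rsub rone rw)
       else if i = 4 then rmul (rmul (rsub rone ru) (rsub rone rv)) rw
       else if i = 5 then rmul (rmul ru rv) (rsub rone rw)
       else if i = 6 then rmul (rmul ru (rsub rone rv)) rw
       else if i = 7 then rmul (rmul (rsub rone ru) rv) rw
       else rmul (rmul ru rv) rw)"

definition vecs :: "nat \<Rightarrow> (nat \<Rightarrow> 'a::zero) set" where
  "vecs n = {x. \<forall>j\<ge>n. x j = 0}"

definition linear_code_R :: "nat \<Rightarrow> (nat \<Rightarrow> R) set \<Rightarrow> bool" where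
  "linear_code_R n C \<longleftrightarrow> C \<subseteq> {x. \<forall>j\<ge>n. x j = rzero} \<and> (\<lambda>j. rzero) \<in> C
     \<and> (\<forall>x\<in>C. \<forall>y\<in>C. (\<lambda>j. radd (x j) (y j)) \<in> C)
     \<and> (\<forall>r. \<forall>x\<in>C. (\<lambda>j. rmul r (x j)) \<in> C)"

definition rsum8 :: "(nat \<Rightarrow> R) \<Rightarrow> R" where
  "rsum8 f = foldr radd (map f [1..<9]) rzero"

definition comps :: "(nat \<Rightarrow> R) \<Rightarrow> nat \<Rightarrow> (nat \<Rightarrow> Z4)" where
  "comps x = (THE ys. (\<forall>i. i \<notin> {1..8} \<longrightarrow> ys i = (\<lambda>j. 0))
       \<and> (\<forall>j. x j = rsum8 (\<lambda>i. rmul (rconst (ys i j)) (eta i))))"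

definition component_code :: "(nat \<Rightarrow> R) set \<Rightarrow> nat \<Rightarrow> (nat \<Rightarrow> Z4) set" where
  "component_code C i = {comps x i | x. x \<in> C}"

definition hdist :: "nat \<Rightarrow> (nat \<Rightarrow> 'a) \<Rightarrow> (nat \<Rightarrow> 'a) \<Rightarrow> nat" where
  "hdist n x y = card {j. j < n \<and> x j \<noteq> y j}"

definition dmin :: "nat \<Rightarrow> (nat \<Rightarrow> 'a) set \<Rightarrow> nat" where
  "dmin n D = Min {hdist n x y | x y. x \<in> D \<and> y \<in> D \<and> x \<noteq> y}"

definition is_MDS :: "nat \<Rightarrow> (nat \<Rightarrow> 'a::finite) set \<Rightarrow> bool" where
  "is_MDS n D \<longleftrightarrow> real (dmin n D) = real n - log (real CARD('a)) (real (card D)) + 1"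

end

theory Submission
  imports Defs "HOL-Library.FuncSet" "HOL-Library.Cardinality"
begin


definition mle :: "mono \<Rightarrow> mono \<Rightarrow> bool" where
  "mle m p = ((fst m \<longrightarrow> fst p) \<and> (fst (snd m) \<longrightarrow> fst (snd p)) \<and> (snd (snd m) \<longrightarrow> snd (snd p)))"

definition ev :: "R \<Rightarrow> mono \<Rightarrow> Z4" where
  "ev r p = (\<Sum>m\<in>{m. mle m p}. r m)"

lemma mle_mult: "mle (mono_mult a b) p = (mle a p \<and> mle b p)"
  by (cases a; cases b; auto simp: mle_def mono_mult_def)

lemma ev_mult: "ev (rmul f g) p = ev f p * ev g p"
proof -
  have "ev (rmul f g) p = (\<Sum>m\<in>{m. mle m p}. \<Sum>q\<in>{q. mono_mult (fst q) (snd q) = m}. f (fst q) * g (snd q))"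
    by (simp add: ev_def rmul_def)
  also have "\<dots> = (\<Sum>m\<in>{m. mle m p}. \<Sum>q\<in>{q. q \<in> {q. mle (fst q) p \<and> mle (snd q) p} \<and> mono_mult (fst q) (snd q) = m}. f (fst q) * g (snd q))"
    by (rule sum.cong) (auto intro!: sum.cong simp: mle_mult[symmetric])
  also have "\<dots> = (\<Sum>q\<in>{q. mle (fst q) p \<and> mle (snd q) p}. f (fst q) * g (snd q))"
    by (rule sum.group) (auto simp: mle_mult)
  also have "{q. mle (fst q) p \<and> mle (snd q) p} = {m. mle m p} \<times> {m. mle m p}" by auto
  also have "(\<Sum>q\<in>{m. mle m p} \<times> {m. mle m p}. f (fst q) * g (snd q)) = ev f p * ev g p"
    by (simp add: ev_def sum_product sum.cartesian_product split_def)
  finally show ?thesis .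
qed

lemma ev_add: "ev (radd f g) p = ev f p + ev g p"
  by (simp add: ev_def radd_def sum.distrib)
lemma ev_sub: "ev (rsub f g) p = ev f p - ev g p"
  by (simp add: ev_def rsub_def sum_subtractf)
lemma ev_zero: "ev rzero p = 0"
  by (simp add: ev_def rzero_def)
lemma ev_const: "ev (rconst c) p = c"
  by (simp add: ev_def rconst_def sum.delta' mle_def)
lemma ev_one: "ev rone p = 1"
  by (simp add: rone_def ev_const)
lemma ev_u: "ev ru p = (if fst p then 1 else 0)"
  by (simp add: ev_def ru_def sum.delta' mle_def)
lemma ev_v: "ev rv p = (if fst (snd p) then 1 else 0)"
  by (simp add: ev_def rv_def sum.delta' mle_def)
lemma ev_w: "ev rw p = (if snd (snd p) then 1 else 0)"
  by (simp add: ev_def rw_def sum.delta' mle_def)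

definition pt :: "nat \<Rightarrow> mono" where
  "pt i = (if i = 1 then (False,False,False) else if i = 2 then (True,False,False)
     else if i = 3 then (False,True,False) else if i = 4 then (False,False,True)
     else if i = 5 then (True,True,False) else if i = 6 then (True,False,True)
     else if i = 7 then (False,True,True) else (True,True,True))"

lemma ev_eta: "i \<in> {1..8} \<Longrightarrow> ev (eta i) p = (if p = pt i then 1 else 0)"
  apply (cases p)
  by (auto simp: eta_def ev_mult ev_sub ev_one ev_u ev_v ev_w pt_def)

lemma ev_explicit: "ev r (a,b,c) = r (False,False,False) + (if a then r (True,False,False) else 0)
  + (if b then r (False,True,False) else 0) + (if c then r (False,False,True) else 0)
  + (if a \<and> b then r (True,True,False) else 0) + (if a \<and> c then r (True,False,True) else 0)
  + (if b \<and> c then r (False,True,True) else 0) + (if a \<and> b \<and> c then r (True,True,True) else 0)"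
proof -
  have "{m. mle m (a,b,c)} = (if a then {False,True} else {False}) \<times> (if b then {False,True} else {False}) \<times> (if c then {False,True} else {False})" by (auto simp: mle_def)
  show ?thesis unfolding ev_def \<open>{m. mle m (a,b,c)} = _\<close>
    by (cases a; cases b; cases c; simp add: algebra_simps)
qed

lemma in18: "i \<in> {1..8::nat} \<Longrightarrow> i = 1 \<or> i = 2 \<or> i = 3 \<or> i = 4 \<or> i = 5 \<or> i = 6 \<or> i = 7 \<or> i = 8"
  by auto

lemma pt_inj: "i \<in> {1..8} \<Longrightarrow> k \<in> {1..8} \<Longrightarrow> pt i = pt k \<longleftrightarrow> i = k"
proof -
  assume a: "i \<in> {1..8}" "k \<in> {1..8}"
  from in18[OF a(1)] in18[OF a(2)] show ?thesis by (elim disjE; simp add: pt_def)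
qed

lemma pt_surj: "\<exists>k\<in>{1..8}. p = pt k"
proof -
  obtain a b c where p: "p = (a,b,c)" by (cases p) auto
  show ?thesis unfolding p
    by (cases a; cases b; cases c; simp add: pt_def;
        (rule bexI[of _ 1]; simp; fail)?; (rule bexI[of _ 2]; simp; fail)?;
        (rule bexI[of _ 3]; simp; fail)?; (rule bexI[of _ 4]; simp; fail)?;
        (rule bexI[of _ 5]; simp; fail)?; (rule bexI[of _ 6]; simp; fail)?;
        (rule bexI[of _ 7]; simp; fail)?; (rule bexI[of _ 8]; simp; fail)?)
qed

lemma ev_zero_imp: assumes "\<forall>p. ev t p = 0" shows "t = rzero"
proof -
  have e: "ev t (a,b,c) = 0" for a b c using assms by blast
  note e1 = e[of False False False, unfolded ev_explicit, simplified]
  note e2 = e[of True False False, unfolded ev_explicit, simplified]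
  note e3 = e[of False True False, unfolded ev_explicit, simplified]
  note e4 = e[of False False True, unfolded ev_explicit, simplified]
  note e5 = e[of True True False, unfolded ev_explicit, simplified]
  note e6 = e[of True False True, unfolded ev_explicit, simplified]
  note e7 = e[of False True True, unfolded ev_explicit, simplified]
  note e8 = e[of True True True, unfolded ev_explicit, simplified]
  show ?thesis
  proof
    fix m :: mono
    obtain a b c where m: "m = (a,b,c)" by (cases m) auto
    show "t m = rzero m" unfolding m rzero_def
      using e1 e2 e3 e4 e5 e6 e7 e8
      by (cases a; cases b; cases c; simp)
  qed
qed

lemma ev_inj: assumes "\<forall>k\<in>{1..8}. ev r (pt k) = ev s (pt k)" shows "r = s"
proof -
  have "\<forall>p. ev (rsub r s) p = 0"
    using assms pt_surj by (metis ev_sub right_minus_eq)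
  hence "rsub r s = rzero" by (rule ev_zero_imp)
  thus ?thesis by (auto simp: rsub_def rzero_def fun_eq_iff dest: fun_cong)
qed

lemma ev_foldr: "ev (foldr radd (map f l) rzero) p = (\<Sum>i\<leftarrow>l. ev (f i) p)"
  by (induction l) (auto simp: ev_add ev_zero)

lemma ev_rsum8: "ev (rsum8 f) p = (\<Sum>i\<in>{1..8}. ev (f i) p)"
proof -
  have "{1..8::nat} = set [1..<9]" by auto
  thus ?thesis unfolding rsum8_def ev_foldr by (simp add: sum_list_distinct_conv_sum_set)
qed

lemma sum_pick: assumes "k \<in> {1..8}"
  shows "(\<Sum>i\<in>{1..8}. c i * (if pt k = pt i then 1 else 0)) = (c k :: Z4)"
proof -
  have "(\<Sum>i\<in>{1..8}. c i * (if pt k = pt i then 1 else 0)) = (\<Sum>i\<in>{1..8}. if i = k then c i else 0)"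
    by (rule sum.cong) (use assms pt_inj in auto)
  also have "\<dots> = c k" using assms by (simp add: sum.delta')
  finally show ?thesis .
qed

lemma ev_rsum8_eta: "k \<in> {1..8} \<Longrightarrow> ev (rsum8 (\<lambda>i. rmul (rconst (c i)) (eta i))) (pt k) = c k"
proof -
  assume k: "k \<in> {1..8}"
  have "ev (rsum8 (\<lambda>i. rmul (rconst (c i)) (eta i))) (pt k) = (\<Sum>i\<in>{1..8}. c i * (if pt k = pt i then 1 else 0))"
    unfolding ev_rsum8 by (rule sum.cong) (auto simp: ev_mult ev_const ev_eta)
  thus ?thesis using sum_pick[OF k] by simp
qed

lemma ev_rsum8_eta2: "k \<in> {1..8} \<Longrightarrow> ev (rsum8 (\<lambda>i. rmul (eta i) (y i))) (pt k) = ev (y k) (pt k)"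
proof -
  assume k: "k \<in> {1..8}"
  have "ev (rsum8 (\<lambda>i. rmul (eta i) (y i))) (pt k) = (\<Sum>i\<in>{1..8}. ev (y i) (pt k) * (if pt k = pt i then 1 else 0))"
    unfolding ev_rsum8 by (rule sum.cong) (auto simp: ev_mult ev_eta)
  thus ?thesis using sum_pick[OF k] by simp
qed

lemma comps_eq: "comps x = (\<lambda>i. if i \<in> {1..8} then (\<lambda>j. ev (x j) (pt i)) else (\<lambda>j. 0))"
  unfolding comps_def
proof (rule the_equality)
  show "(\<forall>i. i \<notin> {1..8} \<longrightarrow> (if i \<in> {1..8} then (\<lambda>j. ev (x j) (pt i)) else (\<lambda>j. 0)) = (\<lambda>j. 0)) \<and>
    (\<forall>j. x j = rsum8 (\<lambda>i. rmul (rconst ((if i \<in> {1..8} then (\<lambda>j. ev (x j) (pt i)) else (\<lambda>j. 0)) j)) (eta i)))"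
  proof (intro conjI allI impI)
    fix j
    show "x j = rsum8 (\<lambda>i. rmul (rconst ((if i \<in> {1..8} then (\<lambda>j. ev (x j) (pt i)) else (\<lambda>j. 0)) j)) (eta i))"
      by (rule ev_inj) (simp add: ev_rsum8_eta)
  qed (rule if_not_P)
next
  fix ys assume h: "(\<forall>i. i \<notin> {1..8} \<longrightarrow> ys i = (\<lambda>j. 0)) \<and> (\<forall>j. x j = rsum8 (\<lambda>i. rmul (rconst (ys i j)) (eta i)))"
  show "ys = (\<lambda>i. if i \<in> {1..8} then (\<lambda>j. ev (x j) (pt i)) else (\<lambda>j. 0))"
  proof (intro ext)
    fix i j
    show "ys i j = (if i \<in> {1..8} then (\<lambda>j. ev (x j) (pt i)) else (\<lambda>j. 0)) j"
    proof (cases "i \<in> {1..8}")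
      case True
      have "ev (x j) (pt i) = ys i j" using h ev_rsum8_eta[OF True, of "\<lambda>i. ys i j"] by simp
      then show ?thesis using True by simp
    next
      case False
      have "ys i = (\<lambda>j. 0)" using h False by blast
      then show ?thesis unfolding if_not_P[OF False] by simp
    qed
  qed
qed



lemma hdist_le: "hdist n x y \<le> n"
proof -
  have "{j. j < n \<and> x j \<noteq> y j} \<subseteq> {..<n}" by auto
  hence "card {j. j < n \<and> x j \<noteq> y j} \<le> card {..<n}" by (rule card_mono[rotated]) simp
  thus ?thesis by (simp add: hdist_def)
qed

lemma fin_dists: "finite {hdist n x y | x y. x \<in> D \<and> y \<in> D \<and> x \<noteq> y}"
  by (rule finite_subset[of _ "{..n}"]) (auto simp: hdist_le)

lemma dmin_le: "x \<in> D \<Longrightarrow> y \<in> D \<Longrightarrow> x \<noteq> y \<Longrightarrow> dmin n D \<le> hdist n x y"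
  unfolding dmin_def by (rule Min_le[OF fin_dists]) blast

lemma dmin_ge: assumes "\<forall>x\<in>D. \<forall>y\<in>D. x \<noteq> y \<longrightarrow> b \<le> hdist n x y" "x \<in> D" "y \<in> D" "x \<noteq> y"
  shows "b \<le> dmin n D"
  unfolding dmin_def using assms by (subst Min_ge_iff[OF fin_dists]) auto

lemma dmin_in: assumes "x \<in> D" "y \<in> D" "x \<noteq> y"
  shows "\<exists>x y. x \<in> D \<and> y \<in> D \<and> x \<noteq> y \<and> dmin n D = hdist n x y"
proof -
  have "dmin n D \<in> {hdist n x y | x y. x \<in> D \<and> y \<in> D \<and> x \<noteq> y}"
    unfolding dmin_def by (rule Min_in[OF fin_dists]) (use assms in blast)
  thus ?thesis by blast
qed

lemma finite_vecs: "finite {x :: nat \<Rightarrow> 'a::finite. \<forall>j\<ge>n. x j = z}"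
proof -
  have "{x :: nat \<Rightarrow> 'a. \<forall>j\<ge>n. x j = z} = {f. \<forall>x. (x \<in> {..<n} \<longrightarrow> f x \<in> UNIV) \<and> (x \<notin> {..<n} \<longrightarrow> f x = z)}"
    by auto
  thus ?thesis using finite_set_of_finite_funs[of "{..<n}" UNIV z] by simp
qed

lemma hdist_pos: assumes "D \<subseteq> {x. \<forall>j\<ge>n. x j = z}" "x \<in> D" "y \<in> D" "x \<noteq> y"
  shows "1 \<le> hdist n x y"
proof -
  obtain j where j: "x j \<noteq> y j" using assms(4) by auto
  have "j < n" using j assms by (metis (mono_tags, lifting) mem_Collect_eq not_le subsetD)
  hence "{j. j < n \<and> x j \<noteq> y j} \<noteq> {}" using j by auto
  moreover have "finite {j. j < n \<and> x j \<noteq> y j}" by simp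
  ultimately show ?thesis unfolding hdist_def by (simp add: Suc_leI card_gt_0_iff)
qed

lemma singleton:
  fixes D :: "(nat \<Rightarrow> 'a::finite) set"
  assumes D: "D \<subseteq> {x. \<forall>j\<ge>n. x j = z}" and xy: "x0 \<in> D" "y0 \<in> D" "x0 \<noteq> y0"
  shows "1 \<le> dmin n D \<and> dmin n D \<le> n \<and> card D \<le> CARD('a) ^ (n + 1 - dmin n D)"
proof -
  let ?d = "dmin n D"
  have d1: "1 \<le> ?d" using dmin_ge[OF _ xy] hdist_pos[OF D] by blast
  have dn: "?d \<le> n" using dmin_le[OF xy, of n] hdist_le[of n x0 y0] by linarith
  define m where "m = n + 1 - ?d"
  have inj: "inj_on (\<lambda>x. restrict x {..<m}) D"
  proof (rule inj_onI, rule ccontr)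
    fix x y assume x: "x \<in> D" and y: "y \<in> D" and e: "restrict x {..<m} = restrict y {..<m}" and ne: "x \<noteq> y"
    have "\<forall>j<m. x j = y j" using e by (metis lessThan_iff restrict_apply')
    hence "{j. j < n \<and> x j \<noteq> y j} \<subseteq> {m..<n}" by (auto simp: not_less[symmetric])
    hence "hdist n x y \<le> card {m..<n}" unfolding hdist_def by (rule card_mono[rotated]) simp
    hence "hdist n x y < ?d" using d1 dn by (simp add: m_def)
    moreover have "?d \<le> hdist n x y" by (rule dmin_le[OF x y ne])
    ultimately show False by simp
  qed
  have img: "(\<lambda>x. restrict x {..<m}) ` D \<subseteq> PiE {..<m} (\<lambda>_. UNIV)" by (auto split: if_splits)
  have "card D \<le> card (PiE {..<m} (\<lambda>_. UNIV :: 'a set))"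
    by (rule card_inj_on_le[OF inj img]) (simp add: finite_PiE)
  also have "\<dots> = CARD('a) ^ m" by (simp add: card_PiE)
  finally show ?thesis using d1 dn by (simp add: m_def)
qed



lemma comps_in: "i \<in> {1..8} \<Longrightarrow> comps x i = (\<lambda>j. ev (x j) (pt i))"
  by (simp add: comps_eq)

lemma comps_out: "i \<notin> {1..8} \<Longrightarrow> comps x i = (\<lambda>j. 0)"
  by (simp only: comps_eq if_not_P if_False)

lemma pos_ne: "x j \<noteq> y j \<Longrightarrow> \<exists>k\<in>{1..8}. comps x k j \<noteq> comps y k j"
  using ev_inj[of "x j" "y j"] by (auto simp: comps_in)

lemma vec_ne: "x \<noteq> y \<Longrightarrow> \<exists>k\<in>{1..8}. comps x k \<noteq> comps y k"
  using pos_ne by (metis ext)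

lemma hdist_comp: "hdist n (comps x k) (comps y k) \<le> hdist n x y"
proof -
  have "{j. j < n \<and> comps x k j \<noteq> comps y k j} \<subseteq> {j. j < n \<and> x j \<noteq> y j}"
    by (cases "k \<in> {1..8}") (auto simp: comps_in comps_out)
  thus ?thesis unfolding hdist_def by (rule card_mono[rotated]) simp
qed

lemma comps_eta: assumes "i \<in> {1..8}"
  shows "comps (\<lambda>j. rmul (eta i) (x j)) k = (if k = i then comps x k else (\<lambda>j. 0))"
proof (cases "k \<in> {1..8}")
  case True
  then show ?thesis using assms pt_inj[OF True assms]
    by (auto simp: comps_in ev_mult ev_eta)
next
  case False
  then show ?thesis using assms by (auto simp: comps_out)
qed

lemma hdist_eta: assumes "i \<in> {1..8}"
  shows "hdist n (\<lambda>j. rmul (eta i) (x j)) (\<lambda>j. rmul (eta i) (y j)) = hdist n (comps x i) (comps y i)"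
proof -
  have "rmul (eta i) (x j) \<noteq> rmul (eta i) (y j) \<longleftrightarrow> comps x i j \<noteq> comps y i j" for j
  proof
    assume "rmul (eta i) (x j) \<noteq> rmul (eta i) (y j)"
    then obtain k where k: "k \<in> {1..8}" "comps (\<lambda>j. rmul (eta i) (x j)) k j \<noteq> comps (\<lambda>j. rmul (eta i) (y j)) k j"
      using pos_ne[of "\<lambda>j. rmul (eta i) (x j)" j "\<lambda>j. rmul (eta i) (y j)"] by auto
    thus "comps x i j \<noteq> comps y i j" using comps_eta[OF assms] by (cases "k = i") auto
  next
    assume h: "comps x i j \<noteq> comps y i j"
    show "rmul (eta i) (x j) \<noteq> rmul (eta i) (y j)"
    proof
      assume "rmul (eta i) (x j) = rmul (eta i) (y j)"
      hence "comps (\<lambda>j. rmul (eta i) (x j)) i j = comps (\<lambda>j. rmul (eta i) (y j)) i j"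
        using assms by (simp add: comps_in)
      thus False using h comps_eta[OF assms] by simp
    qed
  qed
  thus ?thesis unfolding hdist_def by simp
qed

locale lc =
  fixes n :: nat and C :: "(nat \<Rightarrow> R) set"
  assumes lin: "linear_code_R n C"
begin

lemma C_sub: "C \<subseteq> {x. \<forall>j\<ge>n. x j = rzero}" using lin by (simp add: linear_code_R_def)
lemma zero_C: "(\<lambda>j. rzero) \<in> C" using lin by (simp add: linear_code_R_def)
lemma add_C: "x \<in> C \<Longrightarrow> y \<in> C \<Longrightarrow> (\<lambda>j. radd (x j) (y j)) \<in> C" using lin by (simp add: linear_code_R_def)
lemma mul_C: "x \<in> C \<Longrightarrow> (\<lambda>j. rmul r (x j)) \<in> C" using lin by (simp add: linear_code_R_def)

lemma finite_C: "finite C" using finite_subset[OF C_sub finite_vecs] .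

lemma cc_sub: "component_code C i \<subseteq> {y. \<forall>j\<ge>n. y j = 0}"
proof
  fix y assume "y \<in> component_code C i"
  then obtain x where x: "x \<in> C" "y = comps x i" by (auto simp: component_code_def)
  show "y \<in> {y. \<forall>j\<ge>n. y j = 0}"
  proof (cases "i \<in> {1..8}")
    case True
    then show ?thesis using x C_sub by (auto simp: comps_in ev_zero)
  next
    case False
    then show ?thesis using x by (simp add: comps_out)
  qed
qed

lemma finite_cc: "finite (component_code C i)" using finite_subset[OF cc_sub finite_vecs] .

lemma foldr_C: "\<forall>i\<in>set l. (\<lambda>j. g i j) \<in> C \<Longrightarrow> (\<lambda>j. foldr radd (map (\<lambda>i. g i j) l) rzero) \<in> C"
  by (induction l) (auto simp: zero_C intro: add_C[of "\<lambda>j. g _ j", simplified])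

lemma card_C: "card C = (\<Prod>i\<in>{1..8}. card (component_code C i))"
proof -
  let ?F = "\<lambda>x. restrict (comps x) {1..8}"
  have "bij_betw ?F C (PiE {1..8} (component_code C))"
  proof (rule bij_betwI')
    fix x y assume "x \<in> C" "y \<in> C"
    show "(?F x = ?F y) = (x = y)"
    proof
      assume "?F x = ?F y"
      hence "\<forall>k\<in>{1..8}. comps x k = comps y k" by (metis restrict_apply')
      thus "x = y" using vec_ne by blast
    qed simp
  next
    fix x assume "x \<in> C"
    thus "?F x \<in> PiE {1..8} (component_code C)" by (auto simp: component_code_def)
  next
    fix f assume f: "f \<in> PiE {1..8} (component_code C)"
    have "\<forall>i\<in>{1..8}. \<exists>x\<in>C. comps x i = f i"
    proof
      fix i :: nat assume i: "i \<in> {1..8}"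
      have "f i \<in> component_code C i" using PiE_mem[OF f i] .
      thus "\<exists>x\<in>C. comps x i = f i" by (auto simp: component_code_def)
    qed
    then obtain xs where xs: "\<And>i. i \<in> {1..8} \<Longrightarrow> xs i \<in> C \<and> comps (xs i) i = f i" by metis
    define z where "z = (\<lambda>j. rsum8 (\<lambda>i. rmul (eta i) (xs i j)))"
    have "z \<in> C" unfolding z_def rsum8_def
      by (rule foldr_C) (use xs in \<open>auto intro!: mul_C\<close>)
    moreover have "?F z = f"
    proof
      fix k show "?F z k = f k"
      proof (cases "k \<in> {1..8}")
        case True
        have "comps z k = comps (xs k) k" using True
          by (simp add: comps_in z_def ev_rsum8_eta2)
        then show ?thesis using True xs by simp
      next
        case False
        show ?thesis unfolding restrict_apply if_not_P[OF False] PiE_arb[OF f False] ..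
      qed
    qed
    ultimately show "\<exists>z\<in>C. f = ?F z" by metis
  qed
  hence "card C = card (PiE {1..8} (component_code C))" by (rule bij_betw_same_card)
  also have "\<dots> = (\<Prod>i\<in>{1..8}. card (component_code C i))" by (simp add: card_PiE)
  finally show ?thesis .
qed

lemma F2: assumes i: "i \<in> {1..8}" and y: "y \<in> component_code C i" "y' \<in> component_code C i" "y \<noteq> y'"
  shows "dmin n C \<le> dmin n (component_code C i)"
proof -
  obtain a b where ab: "a \<in> component_code C i" "b \<in> component_code C i" "a \<noteq> b"
    "dmin n (component_code C i) = hdist n a b" using dmin_in[OF y] by blast
  obtain x x' where x: "x \<in> C" "x' \<in> C" "a = comps x i" "b = comps x' i" using ab by (auto simp: component_code_def)
  let ?z = "\<lambda>j. rmul (eta i) (x j)" and ?z' = "\<lambda>j. rmul (eta i) (x' j)"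
  have zC: "?z \<in> C" "?z' \<in> C" using x mul_C by auto
  have "?z \<noteq> ?z'"
  proof
    assume "?z = ?z'"
    hence "comps ?z i = comps ?z' i" by simp
    thus False using comps_eta[OF i] ab x by simp
  qed
  hence "dmin n C \<le> hdist n ?z ?z'" using dmin_le zC by blast
  also have "\<dots> = dmin n (component_code C i)" using hdist_eta[OF i] ab x by simp
  finally show ?thesis .
qed

lemma F3: assumes all: "\<forall>i\<in>{1..8}. dd \<le> dmin n (component_code C i)"
  and x0: "x0 \<in> C" "y0 \<in> C" "x0 \<noteq> y0"
  shows "dd \<le> dmin n C"
proof (rule dmin_ge[OF _ x0], intro ballI impI)
  fix x y assume xy: "x \<in> C" "y \<in> C" "x \<noteq> y"
  then obtain k where k: "k \<in> {1..8}" "comps x k \<noteq> comps y k" using vec_ne by blast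
  have "dd \<le> dmin n (component_code C k)" using all k by blast
  also have "\<dots> \<le> hdist n (comps x k) (comps y k)"
    by (rule dmin_le) (use xy k in \<open>auto simp: component_code_def\<close>)
  also have "\<dots> \<le> hdist n x y" by (rule hdist_comp)
  finally show "dd \<le> hdist n x y" .
qed

end



lemma log_prod: "finite A \<Longrightarrow> (\<forall>i\<in>A. (0::real) < f i) \<Longrightarrow> log b (\<Prod>i\<in>A. f i) = (\<Sum>i\<in>A. log b (f i))"
  by (induction A rule: finite_induct) (auto simp: log_mult prod_pos)

lemma CARD_R: "CARD(R) = 4^8" by (simp add: card_fun)
lemma CARD_4: "CARD(4) = 4" by simp

lemma eq_sum: assumes "finite S" "\<forall>i\<in>S. f i \<le> (b::real)" "sum f S = real (card S) * b"
  shows "\<forall>i\<in>S. f i = b"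
proof (rule ccontr)
  assume "\<not> (\<forall>i\<in>S. f i = b)"
  then obtain i where i: "i \<in> S" "f i < b" using assms(2) by force
  have "sum f S < sum (\<lambda>_. b) S"
    by (rule sum_strict_mono_ex1) (use assms i in auto)
  thus False using assms(3) by simp
qed

lemma two_el: "finite A \<Longrightarrow> 2 \<le> card A \<Longrightarrow> \<exists>x y. x \<in> A \<and> y \<in> A \<and> x \<noteq> y"
  by (metis card_le_Suc0_iff_eq not_less_eq_eq numeral_2_eq_2)

lemma log4_le: assumes "(q::nat) \<le> 4 ^ m" "1 \<le> q" shows "log 4 (real q) \<le> real m"
proof -
  have "log 4 (real q) \<le> log 4 (4 ^ m)"
    using assms by (subst log_le_cancel_iff) (auto simp: of_nat_le_iff[symmetric])
  thus ?thesis by (simp add: log_nat_power)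
qed




theorem mainTheorem3:
  fixes n :: nat and C :: "(nat \<Rightarrow> R) set"
  assumes "linear_code_R n C"
    and "C \<noteq> {(\<lambda>j. rzero)}"
  shows "is_MDS n C \<longleftrightarrow>
           ((\<forall>i\<in>{1..8}. is_MDS n (component_code C i))
            \<and> (\<forall>i\<in>{1..8}. \<forall>k\<in>{1..8}.
                  card (component_code C i) = card (component_code C k)
                \<and> dmin n (component_code C i) = dmin n (component_code C k)))"
proof -
  interpret lc n C by unfold_locales (rule assms(1))
  let ?cc = "component_code C"
  let ?q = "\<lambda>i. card (?cc i)"
  let ?K = "\<lambda>i. log 4 (real (?q i))"
  let ?d = "dmin n C"
  obtain y0 where y0: "y0 \<in> C" "y0 \<noteq> (\<lambda>j. rzero)" using assms(2) zero_C by blast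
  note two = zero_C y0(1) y0(2)[symmetric]
  have sC: "C \<subseteq> {x. \<forall>j\<ge>n. x j = rzero}" by (rule C_sub)
  from singleton[OF sC two] have d1: "1 \<le> ?d" and dn: "?d \<le> n" by auto
  have q1: "1 \<le> ?q i" for i
  proof -
    have "(\<lambda>j. 0) \<in> ?cc i"
      using zero_C by (auto simp: component_code_def comps_eq ev_zero intro!: exI[of _ "\<lambda>j. rzero"])
    thus ?thesis using finite_cc[of i] by (metis One_nat_def Suc_leI card_gt_0_iff empty_iff)
  qed
  have logC: "log (real CARD(R)) (real (card C)) = (\<Sum>i\<in>{1..8}. ?K i) / 8"
  proof -
    have "log (real CARD(R)) (real (card C)) = log (4 ^ 8) (\<Prod>i\<in>{1..8}. real (?q i))"
      by (simp add: CARD_R card_C)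
    also have "\<dots> = log 4 (\<Prod>i\<in>{1..8}. real (?q i)) / 8" using log_base_pow[of "4::real" 8] by simp
    also have "\<dots> = (\<Sum>i\<in>{1..8}. ?K i) / 8"
      using q1 by (subst log_prod) (auto simp: Suc_le_eq)
    finally show ?thesis .
  qed
  have sing: "1 \<le> dmin n (?cc i) \<and> dmin n (?cc i) \<le> n \<and> ?K i \<le> real n + 1 - real (dmin n (?cc i))"
    if "y \<in> ?cc i" "y' \<in> ?cc i" "y \<noteq> y'" for i y y'
  proof -
    from singleton[OF cc_sub that] have h: "1 \<le> dmin n (?cc i)" "dmin n (?cc i) \<le> n"
      "?q i \<le> 4 ^ (n + 1 - dmin n (?cc i))" by auto
    have "?K i \<le> real (n + 1 - dmin n (?cc i))" by (rule log4_le[OF h(3) q1])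
    thus ?thesis using h by (simp add: of_nat_diff)
  qed
  show ?thesis
  proof
    assume mds: "is_MDS n C"
    hence deq: "real ?d = real n - (\<Sum>i\<in>{1..8}. ?K i) / 8 + 1" unfolding is_MDS_def logC .
    have bnd: "\<forall>i\<in>{1..8::nat}. real ?d + ?K i \<le> real n + 1"
    proof
      fix i :: nat assume i: "i \<in> {1..8}"
      show "real ?d + ?K i \<le> real n + 1"
      proof (cases "\<exists>y y'. y \<in> ?cc i \<and> y' \<in> ?cc i \<and> y \<noteq> y'")
        case True
        then obtain y y' where yy: "y \<in> ?cc i" "y' \<in> ?cc i" "y \<noteq> y'" by blast
        from F2[OF i yy] sing[OF yy] show ?thesis by linarith
      next
        case False
        hence "?q i \<le> Suc 0" by (simp only: card_le_Suc0_iff_eq[OF finite_cc]) blast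
        hence "?q i = 1" using q1[of i] by simp
        thus ?thesis using dn by simp
      qed
    qed
    have "\<forall>i\<in>{1..8::nat}. real ?d + ?K i = real n + 1"
    proof (rule eq_sum[OF _ bnd])
      have "(\<Sum>i\<in>{1..8::nat}. real ?d + ?K i) = 8 * real ?d + (\<Sum>i\<in>{1..8::nat}. ?K i)"
        by (simp add: sum.distrib)
      moreover have "card {1..8::nat} = 8" by simp
      ultimately show "(\<Sum>i\<in>{1..8::nat}. real ?d + ?K i) = real (card {1..8::nat}) * (real n + 1)"
        using deq by simp
    qed simp
    hence Ki: "\<forall>i\<in>{1..8::nat}. ?K i = real n + 1 - real ?d" by auto
    have qi: "real (?q i) = 4 powr (real n + 1 - real ?d)" if i: "i \<in> {1..8}" for i
    proof -
      have "real (?q i) = 4 powr (?K i)" using q1[of i] by simp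
      thus ?thesis using Ki i by simp
    qed
    have two_i: "\<exists>y y'. y \<in> ?cc i \<and> y' \<in> ?cc i \<and> y \<noteq> y'" if i: "i \<in> {1..8}" for i
    proof -
      have "4 powr 1 \<le> 4 powr (real n + 1 - real ?d)" using dn by (intro powr_mono) auto
      hence "2 \<le> ?q i" using qi[OF i] by simp
      thus ?thesis using two_el[OF finite_cc] by blast
    qed
    have di: "dmin n (?cc i) = ?d" if i: "i \<in> {1..8}" for i
    proof -
      obtain y y' where yy: "y \<in> ?cc i" "y' \<in> ?cc i" "y \<noteq> y'" using two_i[OF i] by blast
      have a: "?d \<le> dmin n (?cc i)" by (rule F2[OF i yy])
      have b: "?K i \<le> real n + 1 - real (dmin n (?cc i))" using sing[OF yy] by blast
      have c: "?K i = real n + 1 - real ?d" using Ki i by blast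
      from a b c have "real (dmin n (?cc i)) \<le> real ?d" by linarith
      with a show ?thesis by simp
    qed
    show "(\<forall>i\<in>{1..8}. is_MDS n (?cc i)) \<and> (\<forall>i\<in>{1..8}. \<forall>k\<in>{1..8}. ?q i = ?q k \<and> dmin n (?cc i) = dmin n (?cc k))"
    proof (intro conjI ballI)
      fix i :: nat assume i: "i \<in> {1..8}"
      show "is_MDS n (?cc i)" unfolding is_MDS_def CARD_4 using di[OF i] Ki i by simp
    next
      fix i k :: nat assume i: "i \<in> {1..8}" and k: "k \<in> {1..8}"
      show "?q i = ?q k" using qi[OF i] qi[OF k] by (metis of_nat_eq_iff)
      show "dmin n (?cc i) = dmin n (?cc k)" using di i k by metis
    qed
  next
    assume h: "(\<forall>i\<in>{1..8}. is_MDS n (?cc i)) \<and> (\<forall>i\<in>{1..8}. \<forall>k\<in>{1..8}. ?q i = ?q k \<and> dmin n (?cc i) = dmin n (?cc k))"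
    have one: "(1::nat) \<in> {1..8}" by simp
    have hh: "\<forall>i\<in>{1..8}. \<forall>k\<in>{1..8}. ?q i = ?q k \<and> dmin n (?cc i) = dmin n (?cc k)"
      using h by (rule conjunct2)
    have qe: "\<forall>i\<in>{1..8}. ?q i = ?q 1"
    proof
      fix i :: nat assume "i \<in> {1..8}" thus "?q i = ?q 1" using hh one by blast
    qed
    have de: "\<forall>i\<in>{1..8}. dmin n (?cc i) = dmin n (?cc 1)"
    proof
      fix i :: nat assume "i \<in> {1..8}" thus "dmin n (?cc i) = dmin n (?cc 1)" using hh one by blast
    qed
    have "(\<Prod>i\<in>{1..8}. ?q i) = (\<Prod>i\<in>{1..8::nat}. ?q 1)" by (rule prod.cong[OF refl]) (use qe in blast)
    hence "card C = ?q 1 ^ 8" unfolding card_C by simp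
    moreover have "\<not> card C \<le> Suc 0"
    proof
      assume "card C \<le> Suc 0"
      hence "\<forall>a\<in>C. \<forall>b\<in>C. a = b" by (simp only: card_le_Suc0_iff_eq[OF finite_C])
      thus False using two by blast
    qed
    ultimately have "2 \<le> ?q 1"
    proof -
      assume cq: "card C = ?q 1 ^ 8" and nc: "\<not> card C \<le> Suc 0"
      show ?thesis
      proof (rule ccontr)
        assume "\<not> 2 \<le> ?q 1" hence "?q 1 \<le> 1" by simp
        hence "?q 1 ^ 8 \<le> 1 ^ 8" by (rule power_mono) simp
        thus False using cq nc by simp
      qed
    qed
    hence "\<exists>y y'. y \<in> ?cc i \<and> y' \<in> ?cc i \<and> y \<noteq> y'" if "i \<in> {1..8}" for i
    proof -
      have "2 \<le> ?q i" using qe[rule_format, OF that] \<open>2 \<le> ?q 1\<close> by linarith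
      thus ?thesis by (rule two_el[OF finite_cc])
    qed
    then obtain y y' where yy: "y \<in> ?cc 1" "y' \<in> ?cc 1" "y \<noteq> y'" using one by blast
    have "?d \<le> dmin n (?cc 1)" by (rule F2[OF one yy])
    moreover have "dmin n (?cc 1) \<le> ?d" by (rule F3[OF _ two]) (use de in \<open>metis order_refl\<close>)
    ultimately have dd: "?d = dmin n (?cc 1)" by simp
    have "(\<Sum>i\<in>{1..8::nat}. ?K i) = (\<Sum>i\<in>{1..8::nat}. ?K 1)" by (rule sum.cong[OF refl]) (use qe in metis)
    hence sK: "(\<Sum>i\<in>{1..8::nat}. ?K i) / 8 = ?K 1" by simp
    have "is_MDS n (?cc 1)" using conjunct1[OF h] one by blast
    thus "is_MDS n C" unfolding is_MDS_def logC sK dd CARD_4 by simp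
  qed
qed

end
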